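(* Let $E\subseteq\mathcal M^d$ be a compact set in the free topology that is closed under finite direct sums. If $U$ is a free neighbourhood of $E$ and $E\subseteq\bigcup_{\alpha\in A}G_{\delta_\alpha}\subseteq U$ for some family $\{\delta_\alpha\}_{\alpha\in A}$ of matrices of free polynomials, then there exist $\delta\in\{\delta_\alpha:\alpha\in A\}$ and a real number $t>1$ such that $E\subseteq G_{t\delta}\subseteq G_\delta\subseteq U$.
   Context: $\mathcal M^d=\bigcup_n\mathcal M_n^d$ ($d$-tuples of $n\times n$ complex matrices). For a matrix $\delta$ of free polynomials in $d$ noncommuting variables, $G_\delta=\{M\in\mathcal M^d:\|\delta(M)\|<1\}$. The free topology on $\mathcal M^d$ is the topology with the sets $G_\delta$ as a basis. Direct sums of $d$-tuples are taken componentwise. *)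

theory Defs
  imports Complex_Main "Jordan_Normal_Form.Matrix"
begin

(* A free (noncommutative) polynomial in d variables: finitely supported
   coefficient function on words (lists of variable indices < d). *)
type_synonym fpoly = "nat list \<Rightarrow> complex"

definition free_poly :: "nat \<Rightarrow> fpoly \<Rightarrow> bool" where
  "free_poly d p \<longleftrightarrow> finite {w. p w \<noteq> 0} \<and> (\<forall>w. p w \<noteq> 0 \<longrightarrow> set w \<subseteq> {..<d})"

definition free_polymat :: "nat \<Rightarrow> fpoly mat \<Rightarrow> bool" where
  "free_polymat d \<delta> \<longleftrightarrow> (\<forall>i<dim_row \<delta>. \<forall>j<dim_col \<delta>. free_poly d (\<delta> $$ (i, j)))"

definition Md :: "nat \<Rightarrow> (nat \<times> complex mat list) set" where
  "Md d = {(n, Xs). n \<ge> 1 \<and> length Xs = d \<and> (\<forall>X\<in>set Xs. X \<in> carrier_mat n n)}"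

definition word_eval :: "nat \<Rightarrow> complex mat list \<Rightarrow> nat list \<Rightarrow> complex mat" where
  "word_eval n Xs w = foldr (\<lambda>i A. Xs ! i * A) w (1\<^sub>m n)"

definition poly_eval :: "fpoly \<Rightarrow> nat \<times> complex mat list \<Rightarrow> complex mat" where
  "poly_eval p M = (case M of (n, Xs) \<Rightarrow>
     mat n n (\<lambda>(i, j). \<Sum>w\<in>{w. p w \<noteq> 0}. p w * word_eval n Xs w $$ (i, j)))"

(* delta(M): the block matrix whose (a,b) block is delta_ab(M). *)
definition polymat_eval :: "fpoly mat \<Rightarrow> nat \<times> complex mat list \<Rightarrow> complex mat" where
  "polymat_eval \<delta> M = (case M of (n, Xs) \<Rightarrow>
     mat (dim_row \<delta> * n) (dim_col \<delta> * n)
       (\<lambda>(i, j). poly_eval (\<delta> $$ (i div n, j div n)) M $$ (i mod n, j mod n)))"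

definition vnorm :: "complex vec \<Rightarrow> real" where
  "vnorm v = sqrt (\<Sum>i<dim_vec v. (cmod (v $ i))\<^sup>2)"

definition opnorm :: "complex mat \<Rightarrow> real" where
  "opnorm A = Sup {vnorm (A *\<^sub>v v) | v. v \<in> carrier_vec (dim_col A) \<and> vnorm v \<le> 1}"

definition G :: "nat \<Rightarrow> fpoly mat \<Rightarrow> (nat \<times> complex mat list) set" where
  "G d \<delta> = {M \<in> Md d. opnorm (polymat_eval \<delta> M) < 1}"

definition scale_polymat :: "real \<Rightarrow> fpoly mat \<Rightarrow> fpoly mat" where
  "scale_polymat t \<delta> = map_mat (\<lambda>p w. complex_of_real t * p w) \<delta>"

definition free_open :: "nat \<Rightarrow> (nat \<times> complex mat list) set \<Rightarrow> bool" where
  "free_open d U \<longleftrightarrow> (\<exists>\<F>. \<F> \<subseteq> {G d \<delta> | \<delta>. free_polymat d \<delta>} \<and> U = \<Union>\<F>)"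

definition free_compact :: "nat \<Rightarrow> (nat \<times> complex mat list) set \<Rightarrow> bool" where
  "free_compact d E \<longleftrightarrow> E \<subseteq> Md d \<and>
     (\<forall>\<U>. (\<forall>U\<in>\<U>. free_open d U) \<and> E \<subseteq> \<Union>\<U> \<longrightarrow>
        (\<exists>\<F>\<subseteq>\<U>. finite \<F> \<and> E \<subseteq> \<Union>\<F>))"

definition dsum :: "nat \<times> complex mat list \<Rightarrow> nat \<times> complex mat list \<Rightarrow> nat \<times> complex mat list" where
  "dsum M N = (case M of (n, Xs) \<Rightarrow> case N of (k, Ys) \<Rightarrow>
     (n + k, map2 (\<lambda>X Y. four_block_mat X (0\<^sub>m n k) (0\<^sub>m k n) Y) Xs Ys))"

definition closed_dsum :: "(nat \<times> complex mat list) set \<Rightarrow> bool" where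
  "closed_dsum E \<longleftrightarrow> (\<forall>M\<in>E. \<forall>N\<in>E. dsum M N \<in> E)"

end

theory Submission
  imports Defs "HOL-Analysis.L2_Norm"
begin

definition opset :: "complex mat \<Rightarrow> real set" where
  "opset A = {vnorm (A *\<^sub>v v) | v. v \<in> carrier_vec (dim_col A) \<and> vnorm v \<le> 1}"

lemma opnorm_opset: "opnorm A = Sup (opset A)"
  unfolding opnorm_def opset_def by simp

lemma vnorm_L2: "vnorm v = L2_set (\<lambda>i. cmod (v $ i)) {..<dim_vec v}"
  unfolding vnorm_def L2_set_def by simp

lemma mult_mat_vec_idx:
  "i < dim_row A \<Longrightarrow> dim_vec v = dim_col A \<Longrightarrow> (A *\<^sub>v v) $ i = (\<Sum>j<dim_col A. A $$ (i,j) * v $ j)"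
  by (simp add: scalar_prod_def lessThan_atLeast0)

lemma comp_le_vnorm: "i < dim_vec v \<Longrightarrow> cmod (v $ i) \<le> vnorm v"
  unfolding vnorm_L2 by (rule member_le_L2_set) auto

lemma opset_bdd: "bdd_above (opset A)"
proof -
  let ?K = "\<Sum>i<dim_row A. \<Sum>j<dim_col A. cmod (A $$ (i,j))"
  have "x \<le> ?K" if xin: "x \<in> opset A" for x
  proof -
    obtain v where v: "x = vnorm (A *\<^sub>v v)" "v \<in> carrier_vec (dim_col A)" "vnorm v \<le> 1"
      using xin unfolding opset_def by blast
    have "x \<le> (\<Sum>i<dim_row A. cmod ((A *\<^sub>v v) $ i))"
      unfolding v(1) vnorm_L2 by (rule order.trans[OF L2_set_le_sum]) auto
    also have "\<dots> \<le> ?K"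
    proof (rule sum_mono)
      fix i assume i: "i \<in> {..<dim_row A}"
      have "cmod ((A *\<^sub>v v) $ i) = cmod (\<Sum>j<dim_col A. A $$ (i,j) * v $ j)"
        using i v(2) mult_mat_vec_idx[of i A v] by auto
      also have "\<dots> \<le> (\<Sum>j<dim_col A. cmod (A $$ (i,j) * v $ j))" by (rule norm_sum)
      also have "\<dots> \<le> (\<Sum>j<dim_col A. cmod (A $$ (i,j)))"
      proof (rule sum_mono)
        fix j assume j: "j \<in> {..<dim_col A}"
        have "cmod (v $ j) \<le> 1" using comp_le_vnorm[of j v] v j by auto
        thus "cmod (A $$ (i,j) * v $ j) \<le> cmod (A $$ (i,j))"
          by (simp add: norm_mult mult_left_le)
      qed
      finally show "cmod ((A *\<^sub>v v) $ i) \<le> (\<Sum>j<dim_col A. cmod (A $$ (i,j)))" .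
    qed
    finally show ?thesis .
  qed
  thus ?thesis by (auto simp: bdd_above_def)
qed

lemma opset_ne: "opset A \<noteq> {}"
proof -
  have "vnorm (0\<^sub>v (dim_col A)) \<le> 1" by (simp add: vnorm_def)
  moreover have "0\<^sub>v (dim_col A) \<in> carrier_vec (dim_col A)" by simp
  ultimately show ?thesis unfolding opset_def by blast
qed

lemma opset_le: "x \<in> opset A \<Longrightarrow> x \<le> opnorm A"
  unfolding opnorm_opset by (rule cSup_upper[OF _ opset_bdd])

lemma opnorm_le: "(\<And>x. x \<in> opset A \<Longrightarrow> x \<le> c) \<Longrightarrow> opnorm A \<le> c"
  unfolding opnorm_opset using opset_ne by (intro cSup_least) auto

lemma vnorm_scale_eq:
  assumes "dim_vec w = dim_vec u" "\<And>i. i < dim_vec u \<Longrightarrow> cmod (w $ i) = k * cmod (u $ i)" "0 \<le> k"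
  shows "vnorm w = k * vnorm u"
proof -
  have "(\<Sum>i<dim_vec w. (cmod (w $ i))\<^sup>2) = k\<^sup>2 * (\<Sum>i<dim_vec u. (cmod (u $ i))\<^sup>2)"
    using assms(1,2) by (simp add: sum_distrib_left power_mult_distrib)
  thus ?thesis unfolding vnorm_def using assms(3) by (simp add: real_sqrt_mult)
qed

lemma smult_mat_vec_vnorm:
  assumes "v \<in> carrier_vec (dim_col A)"
  shows "vnorm ((complex_of_real t \<cdot>\<^sub>m A) *\<^sub>v v) = \<bar>t\<bar> * vnorm (A *\<^sub>v v)"
proof (rule vnorm_scale_eq)
  fix i assume i: "i < dim_vec (A *\<^sub>v v)"
  hence i': "i < dim_row A" by simp
  have "((complex_of_real t \<cdot>\<^sub>m A) *\<^sub>v v) $ i = complex_of_real t * (A *\<^sub>v v) $ i"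
    using mult_mat_vec_idx[of i A v] mult_mat_vec_idx[of i "complex_of_real t \<cdot>\<^sub>m A" v] i' assms
    by (simp add: sum_distrib_left mult.assoc)
  thus "cmod (((complex_of_real t \<cdot>\<^sub>m A) *\<^sub>v v) $ i) = \<bar>t\<bar> * cmod ((A *\<^sub>v v) $ i)"
    by (simp add: norm_mult)
qed auto

lemma opnorm_smult_le:
  assumes "0 \<le> t" shows "opnorm (complex_of_real t \<cdot>\<^sub>m A) \<le> t * opnorm A"
proof (rule opnorm_le)
  fix x assume "x \<in> opset (complex_of_real t \<cdot>\<^sub>m A)"
  then obtain v where v: "x = vnorm ((complex_of_real t \<cdot>\<^sub>m A) *\<^sub>v v)" "v \<in> carrier_vec (dim_col A)" "vnorm v \<le> 1"
    unfolding opset_def by auto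
  have "vnorm (A *\<^sub>v v) \<in> opset A" unfolding opset_def using v by blast
  hence "vnorm (A *\<^sub>v v) \<le> opnorm A" by (rule opset_le)
  thus "x \<le> t * opnorm A" using v smult_mat_vec_vnorm[OF v(2), of t] assms
    by (simp add: mult_left_mono)
qed

lemma opnorm_smult_ge:
  assumes "0 < t" shows "t * opnorm A \<le> opnorm (complex_of_real t \<cdot>\<^sub>m A)"
proof -
  have "opnorm A \<le> opnorm (complex_of_real t \<cdot>\<^sub>m A) / t"
  proof (rule opnorm_le)
    fix x assume "x \<in> opset A"
    then obtain v where v: "x = vnorm (A *\<^sub>v v)" "v \<in> carrier_vec (dim_col A)" "vnorm v \<le> 1"
      unfolding opset_def by auto
    have "vnorm ((complex_of_real t \<cdot>\<^sub>m A) *\<^sub>v v) \<in> opset (complex_of_real t \<cdot>\<^sub>m A)"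
      unfolding opset_def using v by auto
    hence "t * x \<le> opnorm (complex_of_real t \<cdot>\<^sub>m A)"
      using opset_le smult_mat_vec_vnorm[OF v(2), of t] v(1) assms by auto
    thus "x \<le> opnorm (complex_of_real t \<cdot>\<^sub>m A) / t" using assms by (simp add: field_simps)
  qed
  thus ?thesis using assms by (simp add: field_simps)
qed

lemma poly_eval_scale:
  assumes "t \<noteq> 0"
  shows "poly_eval (\<lambda>w. complex_of_real t * p w) M = complex_of_real t \<cdot>\<^sub>m poly_eval p M"
proof -
  have S: "{w. complex_of_real t * p w \<noteq> 0} = {w. p w \<noteq> 0}" using assms by auto
  show ?thesis unfolding poly_eval_def S
    by (cases M) (auto intro!: eq_matI simp: sum_distrib_left mult.assoc)
qed

lemma polymat_eval_scale:
  assumes "t \<noteq> 0"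
  shows "polymat_eval (scale_polymat t \<delta>) M = complex_of_real t \<cdot>\<^sub>m polymat_eval \<delta> M"
proof (cases M)
  case (Pair n Xs)
  show ?thesis unfolding Pair polymat_eval_def scale_polymat_def
  proof (rule eq_matI, goal_cases)
    case (1 i j)
    hence "i div n < dim_row \<delta>" "j div n < dim_col \<delta>"
      by (auto simp: less_mult_imp_div_less)
    moreover have "n > 0" using 1 by (cases n) auto
    hence "i mod n < n" "j mod n < n" by auto
    moreover have "\<And>p. dim_row (poly_eval p (n, Xs)) = n \<and> dim_col (poly_eval p (n, Xs)) = n"
      by (simp add: poly_eval_def)
    ultimately show ?case using 1 poly_eval_scale[OF assms, of "\<delta> $$ (i div n, j div n)" "(n, Xs)"]
      by auto
  qed auto
qed

lemma free_polymat_scale: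
  assumes "t \<noteq> 0" "free_polymat d \<delta>" shows "free_polymat d (scale_polymat t \<delta>)"
  using assms unfolding free_polymat_def free_poly_def scale_polymat_def by auto

lemma divmod_aux:
  assumes "(r::nat) < N" shows "(q * N + r) div N = q" "(q * N + r) mod N = r"
  using assms by auto

lemma polymat_eval_idx:
  assumes "i < dim_row \<delta> * n" "j < dim_col \<delta> * n"
  shows "polymat_eval \<delta> (n, Xs) $$ (i, j) = poly_eval (\<delta> $$ (i div n, j div n)) (n, Xs) $$ (i mod n, j mod n)"
    "dim_row (polymat_eval \<delta> (n, Xs)) = dim_row \<delta> * n"
    "dim_col (polymat_eval \<delta> (n, Xs)) = dim_col \<delta> * n"
  using assms unfolding polymat_eval_def by auto

lemma opnorm_compress:
  fixes \<delta> :: "fpoly mat"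
  assumes m: "0 < m" and om: "ofs + m \<le> N"
    and eq: "\<And>a b i j. a < dim_row \<delta> \<Longrightarrow> b < dim_col \<delta> \<Longrightarrow> i < m \<Longrightarrow> j < m \<Longrightarrow>
      poly_eval (\<delta> $$ (a,b)) (N,Zs) $$ (ofs+i, ofs+j) = poly_eval (\<delta> $$ (a,b)) (m,Ws) $$ (i,j)"
  shows "opnorm (polymat_eval \<delta> (m,Ws)) \<le> opnorm (polymat_eval \<delta> (N,Zs))"
proof -
  define B where "B = polymat_eval \<delta> (m,Ws)"
  define C where "C = polymat_eval \<delta> (N,Zs)"
  define r where "r = dim_row \<delta>"
  define c where "c = dim_col \<delta>"
  define g where "g x = x div m * N + (ofs + x mod m)" for x
  define h where "h j = j div N * m + (j mod N - ofs)" for j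
  have gd: "g x div N = x div m" "g x mod N = ofs + x mod m" for x
    unfolding g_def using m om by (intro divmod_aux; simp add: less_le_trans[OF _ om])+
  have injg: "inj g"
  proof (rule injI)
    fix x y assume "g x = g y"
    hence "x div m = y div m" "x mod m = y mod m" using gd[of x] gd[of y] by auto
    thus "x = y" by (metis div_mult_mod_eq)
  qed
  have gbound: "g x < q * N" if "x < q * m" for x q
  proof -
    have "x div m < q" using that by (simp add: less_mult_imp_div_less)
    hence "x div m * N + N \<le> q * N"
      by (metis Suc_leI mult_Suc mult_le_mono1 add.commute)
    moreover have "ofs + x mod m < N" using m om by (meson mod_less_divisor add_less_mono1 le_trans not_le order.strict_trans2 nat_add_left_cancel_less)
    ultimately show ?thesis unfolding g_def by linarith
  qed
  have hg: "h (g x) = x" for x unfolding h_def gd by simp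
  have gh: "g (h j) = j" "h j < c * m" if "j < c * N" "ofs \<le> j mod N" "j mod N < ofs + m" for j
  proof -
    have hm: "h j div m = j div N" "h j mod m = j mod N - ofs" unfolding h_def
      using that by (intro divmod_aux; simp)+
    show "g (h j) = j" unfolding g_def hm using that by simp
    have "j div N < c" using that by (simp add: less_mult_imp_div_less)
    hence "j div N * m + m \<le> c * m" by (metis Suc_leI mult_Suc mult_le_mono1 add.commute)
    thus "h j < c * m" unfolding h_def using that by linarith
  qed
  have BC: "B $$ (x, y) = C $$ (g x, g y)" if "x < r * m" "y < c * m" for x y
  proof -
    have "x div m < r" "y div m < c" using that by (simp_all add: less_mult_imp_div_less)
    moreover have "x mod m < m" "y mod m < m" using m by auto
    ultimately show ?thesis unfolding B_def C_def
      using that gbound[of x r] gbound[of y c]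
      by (simp add: polymat_eval_idx gd eq r_def c_def)
  qed
  have dB: "dim_row B = r * m" "dim_col B = c * m" unfolding B_def r_def c_def by (simp_all add: polymat_eval_def)
  have dC: "dim_row C = r * N" "dim_col C = c * N" unfolding C_def r_def c_def by (simp_all add: polymat_eval_def)
  show ?thesis unfolding B_def[symmetric] C_def[symmetric]
  proof (rule opnorm_le)
    fix x assume "x \<in> opset B"
    then obtain v where v: "x = vnorm (B *\<^sub>v v)" "v \<in> carrier_vec (c * m)" "vnorm v \<le> 1"
      unfolding opset_def dB by auto
    define v' where "v' = vec (c * N) (\<lambda>j. if ofs \<le> j mod N \<and> j mod N < ofs + m then v $ h j else 0)"
    have v'0: "v' $ j = 0" if "j < c * N" "j \<notin> g ` {..<c*m}" for j
    proof -
      have "\<not> (ofs \<le> j mod N \<and> j mod N < ofs + m)"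
        using gh[of j] that by (metis imageI lessThan_iff)
      thus ?thesis unfolding v'_def using that by auto
    qed
    have v'g: "v' $ g y = v $ y" if "y < c * m" for y
      unfolding v'_def using gbound[OF that] hg[of y] gd[of y] m by simp
    have sub: "g ` {..<q*m} \<subseteq> {..<q*N}" for q using gbound by auto
    have injon: "inj_on g X" for X using injg by (simp add: inj_on_def inj_def)
    have "vnorm v' = vnorm v"
    proof -
      have "(\<Sum>j<c*N. (cmod (v' $ j))\<^sup>2) = (\<Sum>j\<in>g ` {..<c*m}. (cmod (v' $ j))\<^sup>2)"
        using sub[of c] v'0 by (intro sum.mono_neutral_right) auto
      also have "\<dots> = (\<Sum>y<c*m. (cmod (v' $ g y))\<^sup>2)" by (simp add: sum.reindex[OF injon])
      also have "\<dots> = (\<Sum>y<c*m. (cmod (v $ y))\<^sup>2)" using v'g by simp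
      finally show ?thesis unfolding vnorm_def v'_def using v(2) by simp
    qed
    hence v'c: "v' \<in> carrier_vec (dim_col C)" "vnorm v' \<le> 1" using v(3) dC unfolding v'_def by auto
    have Cv: "(C *\<^sub>v v') $ g x = (B *\<^sub>v v) $ x" if "x < r * m" for x
    proof -
      have "(C *\<^sub>v v') $ g x = (\<Sum>j<c*N. C $$ (g x, j) * v' $ j)"
        using mult_mat_vec_idx[of "g x" C v'] gbound[OF that] dC v'c by simp
      also have "\<dots> = (\<Sum>j\<in>g ` {..<c*m}. C $$ (g x, j) * v' $ j)"
        using sub[of c] v'0 by (intro sum.mono_neutral_right) auto
      also have "\<dots> = (\<Sum>y<c*m. C $$ (g x, g y) * v' $ g y)" by (simp add: sum.reindex[OF injon])
      also have "\<dots> = (\<Sum>y<c*m. B $$ (x, y) * v $ y)" using v'g BC that by simp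
      also have "\<dots> = (B *\<^sub>v v) $ x" using mult_mat_vec_idx[of x B v] dB that v(2) by simp
      finally show ?thesis .
    qed
    have "(\<Sum>i<r*m. (cmod ((B *\<^sub>v v) $ i))\<^sup>2) = (\<Sum>i<r*m. (cmod ((C *\<^sub>v v') $ g i))\<^sup>2)"
      using Cv by simp
    also have "\<dots> = (\<Sum>j\<in>g ` {..<r*m}. (cmod ((C *\<^sub>v v') $ j))\<^sup>2)" by (simp add: sum.reindex[OF injon])
    also have "\<dots> \<le> (\<Sum>j<r*N. (cmod ((C *\<^sub>v v') $ j))\<^sup>2)"
      using sub[of r] by (intro sum_mono2) auto
    finally have "vnorm (B *\<^sub>v v) \<le> vnorm (C *\<^sub>v v')" unfolding vnorm_def using dB dC by simp
    moreover have "vnorm (C *\<^sub>v v') \<in> opset C" unfolding opset_def using v'c by blast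
    ultimately show "x \<le> opnorm C" using v(1) opset_le by fastforce
  qed
qed

lemma word_eval_carrier:
  "(\<forall>i\<in>set w. Xs ! i \<in> carrier_mat n n) \<Longrightarrow> word_eval n Xs w \<in> carrier_mat n n"
  by (induction w) (auto simp: word_eval_def)

lemma word_eval_Cons: "word_eval n Xs (i # w) = Xs ! i * word_eval n Xs w"
  by (simp add: word_eval_def)

lemma word_eval_dsum:
  assumes len: "length Ys = length Xs"
    and cX: "\<forall>X\<in>set Xs. X \<in> carrier_mat n n" and cY: "\<forall>Y\<in>set Ys. Y \<in> carrier_mat k k"
    and w: "set w \<subseteq> {..<length Xs}"
  shows "word_eval (n+k) (map2 (\<lambda>X Y. four_block_mat X (0\<^sub>m n k) (0\<^sub>m k n) Y) Xs Ys) w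
    = four_block_mat (word_eval n Xs w) (0\<^sub>m n k) (0\<^sub>m k n) (word_eval k Ys w)"
  using w
proof (induction w)
  case Nil
  then show ?case by (simp add: word_eval_def)
next
  case (Cons i w)
  have i: "i < length Xs" "i < length Ys" using Cons.prems len by auto
  have Xi: "Xs ! i \<in> carrier_mat n n" using cX i by auto
  have Yi: "Ys ! i \<in> carrier_mat k k" using cY i by auto
  have WX: "word_eval n Xs w \<in> carrier_mat n n"
    using Cons.prems cX by (intro word_eval_carrier) auto
  have WY: "word_eval k Ys w \<in> carrier_mat k k"
    using Cons.prems cY len by (intro word_eval_carrier) auto
  have Zi: "map2 (\<lambda>X Y. four_block_mat X (0\<^sub>m n k) (0\<^sub>m k n) Y) Xs Ys ! i
      = four_block_mat (Xs ! i) (0\<^sub>m n k) (0\<^sub>m k n) (Ys ! i)" using i by simp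
  have P1: "Xs ! i * word_eval n Xs w \<in> carrier_mat n n" using Xi WX by simp
  have P2: "Ys ! i * word_eval k Ys w \<in> carrier_mat k k" using Yi WY by simp
  show ?case unfolding word_eval_Cons Zi using Cons
    by (simp add: mult_four_block_mat[OF Xi _ _ Yi WX _ _ WY] Xi Yi WX WY
       left_mult_zero_mat[OF WX] left_mult_zero_mat[OF WY] right_mult_zero_mat[OF Xi]
       right_mult_zero_mat[OF Yi] right_add_zero_mat[OF P1] left_add_zero_mat[OF P2])
qed

lemma dsum_simp: "dsum (n, Xs) (k, Ys) = (n + k, map2 (\<lambda>X Y. four_block_mat X (0\<^sub>m n k) (0\<^sub>m k n) Y) Xs Ys)"
  by (simp add: dsum_def)

lemma poly_eval_dsum:
  assumes p: "free_poly d p" and M: "(n, Xs) \<in> Md d" and N: "(k, Ys) \<in> Md d"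
  shows "i < n \<Longrightarrow> j < n \<Longrightarrow> poly_eval p (dsum (n, Xs) (k, Ys)) $$ (0+i, 0+j) = poly_eval p (n, Xs) $$ (i,j)"
    "i < k \<Longrightarrow> j < k \<Longrightarrow> poly_eval p (dsum (n, Xs) (k, Ys)) $$ (n+i, n+j) = poly_eval p (k, Ys) $$ (i,j)"
proof -
  have len: "length Xs = d" "length Ys = d" and cX: "\<forall>X\<in>set Xs. X \<in> carrier_mat n n"
    and cY: "\<forall>Y\<in>set Ys. Y \<in> carrier_mat k k" using M N by (auto simp: Md_def)
  have we: "word_eval (n+k) (map2 (\<lambda>X Y. four_block_mat X (0\<^sub>m n k) (0\<^sub>m k n) Y) Xs Ys) w
    = four_block_mat (word_eval n Xs w) (0\<^sub>m n k) (0\<^sub>m k n) (word_eval k Ys w)"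
    if "w \<in> {w. p w \<noteq> 0}" for w
    using that p len cX cY by (intro word_eval_dsum) (auto simp: free_poly_def)
  have WX: "word_eval n Xs w \<in> carrier_mat n n" if "w \<in> {w. p w \<noteq> 0}" for w
  proof (intro word_eval_carrier ballI)
    fix i assume "i \<in> set w"
    hence "i < length Xs" using that p len by (auto simp: free_poly_def)
    thus "Xs ! i \<in> carrier_mat n n" using cX nth_mem by blast
  qed
  have WY: "word_eval k Ys w \<in> carrier_mat k k" if "w \<in> {w. p w \<noteq> 0}" for w
  proof (intro word_eval_carrier ballI)
    fix i assume "i \<in> set w"
    hence "i < length Ys" using that p len by (auto simp: free_poly_def)
    thus "Ys ! i \<in> carrier_mat k k" using cY nth_mem by blast
  qed
  show "poly_eval p (dsum (n, Xs) (k, Ys)) $$ (0+i, 0+j) = poly_eval p (n, Xs) $$ (i,j)"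
    if ij: "i < n" "j < n"
  proof -
    have "p w * word_eval (n+k) (map2 (\<lambda>X Y. four_block_mat X (0\<^sub>m n k) (0\<^sub>m k n) Y) Xs Ys) w $$ (i,j)
       = p w * word_eval n Xs w $$ (i,j)" if hw: "w \<in> {w. p w \<noteq> 0}" for w
    proof -
      have "dim_row (word_eval n Xs w) = n" "dim_col (word_eval n Xs w) = n"
           "dim_row (word_eval k Ys w) = k" "dim_col (word_eval k Ys w) = k"
        using WX[OF hw] WY[OF hw] by auto
      thus ?thesis unfolding we[OF hw] using ij by simp
    qed
    hence "(\<Sum>w\<in>{w. p w \<noteq> 0}. p w * word_eval (n+k) (map2 (\<lambda>X Y. four_block_mat X (0\<^sub>m n k) (0\<^sub>m k n) Y) Xs Ys) w $$ (i,j))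
       = (\<Sum>w\<in>{w. p w \<noteq> 0}. p w * word_eval n Xs w $$ (i,j))" by (rule sum.cong[OF refl])
    thus ?thesis unfolding dsum_simp poly_eval_def using ij by simp
  qed
  show "poly_eval p (dsum (n, Xs) (k, Ys)) $$ (n+i, n+j) = poly_eval p (k, Ys) $$ (i,j)"
    if ij: "i < k" "j < k"
  proof -
    have "p w * word_eval (n+k) (map2 (\<lambda>X Y. four_block_mat X (0\<^sub>m n k) (0\<^sub>m k n) Y) Xs Ys) w $$ (n+i,n+j)
       = p w * word_eval k Ys w $$ (i,j)" if hw: "w \<in> {w. p w \<noteq> 0}" for w
    proof -
      have "dim_row (word_eval n Xs w) = n" "dim_col (word_eval n Xs w) = n"
           "dim_row (word_eval k Ys w) = k" "dim_col (word_eval k Ys w) = k"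
        using WX[OF hw] WY[OF hw] by auto
      thus ?thesis unfolding we[OF hw] using ij by simp
    qed
    hence "(\<Sum>w\<in>{w. p w \<noteq> 0}. p w * word_eval (n+k) (map2 (\<lambda>X Y. four_block_mat X (0\<^sub>m n k) (0\<^sub>m k n) Y) Xs Ys) w $$ (n+i,n+j))
       = (\<Sum>w\<in>{w. p w \<noteq> 0}. p w * word_eval k Ys w $$ (i,j))" by (rule sum.cong[OF refl])
    thus ?thesis unfolding dsum_simp poly_eval_def using ij by simp
  qed
qed

lemma G_dsum:
  assumes M: "M \<in> Md d" and N: "N \<in> Md d" and \<delta>: "free_polymat d \<delta>" and S: "dsum M N \<in> G d \<delta>"
  shows "M \<in> G d \<delta> \<and> N \<in> G d \<delta>"
proof -
  obtain n Xs where Mp: "M = (n, Xs)" by (cases M)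
  obtain k Ys where Np: "N = (k, Ys)" by (cases N)
  have n: "0 < n" and k: "0 < k" using M N Mp Np by (auto simp: Md_def)
  have fp: "free_poly d (\<delta> $$ (a, b))" if "a < dim_row \<delta>" "b < dim_col \<delta>" for a b
    using \<delta> that by (simp add: free_polymat_def)
  obtain Zs where Sp: "dsum M N = (n + k, Zs)" unfolding Mp Np dsum_simp by simp
  have lt: "opnorm (polymat_eval \<delta> (n + k, Zs)) < 1" using S Sp by (simp add: G_def)
  have "opnorm (polymat_eval \<delta> (n, Xs)) \<le> opnorm (polymat_eval \<delta> (n + k, Zs))"
    by (rule opnorm_compress[where ofs=0, OF n]) (use poly_eval_dsum(1)[OF fp M[unfolded Mp] N[unfolded Np]] Sp[unfolded Mp Np] in auto)
  moreover have "opnorm (polymat_eval \<delta> (k, Ys)) \<le> opnorm (polymat_eval \<delta> (n + k, Zs))"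
    by (rule opnorm_compress[where ofs=n, OF k]) (use poly_eval_dsum(2)[OF fp M[unfolded Mp] N[unfolded Np]] Sp[unfolded Mp Np] in auto)
  ultimately show ?thesis using lt M N Mp Np by (auto simp: G_def)
qed

lemma opnorm_nonneg: "0 \<le> opnorm A"
proof -
  obtain x where x: "x \<in> opset A" using opset_ne by blast
  have "0 \<le> x" using x unfolding opset_def by (auto simp: vnorm_def intro!: sum_nonneg)
  thus ?thesis using opset_le[OF x] by linarith
qed

lemma G_scale_sub:
  assumes "t > 1" shows "G d (scale_polymat t \<delta>) \<subseteq> G d \<delta>"
proof
  fix M assume M: "M \<in> G d (scale_polymat t \<delta>)"
  let ?A = "polymat_eval \<delta> M"
  have "opnorm (complex_of_real t \<cdot>\<^sub>m ?A) < 1"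
    using M assms polymat_eval_scale[of t \<delta> M] by (simp add: G_def)
  moreover have "t * opnorm ?A \<le> opnorm (complex_of_real t \<cdot>\<^sub>m ?A)"
    using assms by (intro opnorm_smult_ge) auto
  ultimately have "t * opnorm ?A < 1" by linarith
  hence "opnorm ?A < 1" using assms opnorm_nonneg[of ?A]
    by (smt (verit) mult_le_cancel_right1)
  thus "M \<in> G d \<delta>" using M by (simp add: G_def)
qed

lemma G_scale_exists:
  assumes "M \<in> G d \<delta>" shows "\<exists>t>1. M \<in> G d (scale_polymat t \<delta>)"
proof -
  let ?A = "polymat_eval \<delta> M"
  define o' where "o' = opnorm ?A"
  have o1: "o' < 1" "0 \<le> o'" using assms opnorm_nonneg[of ?A] by (auto simp: G_def o'_def)
  define t where "t = 2 / (1 + o')"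
  have t1: "t > 1" unfolding t_def using o1 by (simp add: field_simps)
  have "t * o' < 1" unfolding t_def using o1 by (simp add: field_simps)
  moreover have "opnorm (complex_of_real t \<cdot>\<^sub>m ?A) \<le> t * o'"
    unfolding o'_def using t1 by (intro opnorm_smult_le) auto
  ultimately have "opnorm (polymat_eval (scale_polymat t \<delta>) M) < 1"
    using polymat_eval_scale[of t \<delta> M] t1 by simp
  thus ?thesis using assms t1 by (auto simp: G_def)
qed

lemma avoid_all:
  assumes "finite F" "F \<noteq> {}"
  shows "(\<forall>S\<in>F. \<exists>M\<in>E. M \<notin> S) \<Longrightarrow> (\<forall>S\<in>F. \<forall>M\<in>E. \<forall>N\<in>E. dsum M N \<in> S \<longrightarrow> M \<in> S \<and> N \<in> S)
    \<Longrightarrow> closed_dsum E \<Longrightarrow> \<exists>M\<in>E. \<forall>S\<in>F. M \<notin> S"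
  using assms
proof (induction F rule: finite_ne_induct)
  case (singleton x)
  then show ?case by auto
next
  case (insert x F)
  obtain M' where M': "M' \<in> E" "\<forall>S\<in>F. M' \<notin> S" using insert by auto
  obtain Mx where Mx: "Mx \<in> E" "Mx \<notin> x" using insert.prems by auto
  have "dsum Mx M' \<in> E" using insert.prems(3) Mx M' by (simp add: closed_dsum_def)
  moreover have "\<forall>S\<in>insert x F. dsum Mx M' \<notin> S"
    using insert.prems(2) Mx M' by blast
  ultimately show ?case by blast
qed

theorem proposition9p2:
  fixes d :: nat and E U :: "(nat \<times> complex mat list) set"
    and A :: "'a set" and \<delta>s :: "'a \<Rightarrow> fpoly mat"
  assumes "free_compact d E"
    and "closed_dsum E"
    and "free_open d U" and "E \<subseteq> U"
    and "A \<noteq> {}"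
    and "\<forall>\<alpha>\<in>A. free_polymat d (\<delta>s \<alpha>)"
    and "E \<subseteq> (\<Union>\<alpha>\<in>A. G d (\<delta>s \<alpha>))"
    and "(\<Union>\<alpha>\<in>A. G d (\<delta>s \<alpha>)) \<subseteq> U"
  shows "\<exists>\<alpha>\<in>A. \<exists>t::real. t > 1 \<and>
           E \<subseteq> G d (scale_polymat t (\<delta>s \<alpha>)) \<and>
           G d (scale_polymat t (\<delta>s \<alpha>)) \<subseteq> G d (\<delta>s \<alpha>) \<and>
           G d (\<delta>s \<alpha>) \<subseteq> U"
proof -
  note cpt = assms(1)[unfolded free_compact_def]
  have EMd: "E \<subseteq> Md d" using cpt by blast
  define \<U> where "\<U> = {G d (scale_polymat t (\<delta>s \<alpha>)) | \<alpha> t. \<alpha> \<in> A \<and> t > 1}"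
  have fo: "free_open d (G d \<delta>')" if "free_polymat d \<delta>'" for \<delta>'
    unfolding free_open_def using that by (intro exI[of _ "{G d \<delta>'}"]) auto
  have Uopen: "\<forall>S\<in>\<U>. free_open d S"
    unfolding \<U>_def using assms(6) by (auto intro!: fo free_polymat_scale)
  have Ucov: "E \<subseteq> \<Union>\<U>"
  proof
    fix M assume "M \<in> E"
    then obtain \<alpha> where "\<alpha> \<in> A" "M \<in> G d (\<delta>s \<alpha>)" using assms(7) by blast
    then obtain t where "t > 1" "M \<in> G d (scale_polymat t (\<delta>s \<alpha>))" using G_scale_exists by blast
    thus "M \<in> \<Union>\<U>" unfolding \<U>_def using \<open>\<alpha> \<in> A\<close> by blast
  qed
  obtain F where F: "F \<subseteq> \<U>" "finite F" "E \<subseteq> \<Union>F" using cpt Uopen Ucov by meson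
  have good: "\<exists>\<alpha>\<in>A. \<exists>t::real. t > 1 \<and> E \<subseteq> G d (scale_polymat t (\<delta>s \<alpha>))"
  proof (cases "E = {}")
    case True
    then show ?thesis using assms(5) by (intro bexI[of _ "SOME a. a \<in> A"] exI[of _ 2])
      (auto simp: some_in_eq)
  next
    case False
    hence Fne: "F \<noteq> {}" using F by auto
    have restr: "\<forall>S\<in>F. \<forall>M\<in>E. \<forall>N\<in>E. dsum M N \<in> S \<longrightarrow> M \<in> S \<and> N \<in> S"
    proof (intro ballI impI)
      fix S M N assume S: "S \<in> F" and MN: "M \<in> E" "N \<in> E" "dsum M N \<in> S"
      obtain \<alpha> t where at: "\<alpha> \<in> A" "t > 1" "S = G d (scale_polymat t (\<delta>s \<alpha>))"
        using S F(1) unfolding \<U>_def by blast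
      have "free_polymat d (scale_polymat t (\<delta>s \<alpha>))"
        using at assms(6) by (intro free_polymat_scale) auto
      thus "M \<in> S \<and> N \<in> S" using G_dsum[of M d N] MN EMd at(3) by auto
    qed
    have "\<exists>S\<in>F. E \<subseteq> S"
    proof (rule ccontr)
      assume "\<not> ?thesis"
      hence "\<forall>S\<in>F. \<exists>M\<in>E. M \<notin> S" by blast
      then obtain M where "M \<in> E" "\<forall>S\<in>F. M \<notin> S"
        using avoid_all[OF F(2) Fne _ restr assms(2)] by blast
      thus False using F(3) by blast
    qed
    then obtain S where "S \<in> F" "E \<subseteq> S" by blast
    then show ?thesis using F(1) unfolding \<U>_def by blast
  qed
  then obtain \<alpha> t where "\<alpha> \<in> A" "t > 1" "E \<subseteq> G d (scale_polymat t (\<delta>s \<alpha>))" by blast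
  moreover have "G d (\<delta>s \<alpha>) \<subseteq> U" using assms(8) \<open>\<alpha> \<in> A\<close> by blast
  ultimately show ?thesis using G_scale_sub by blast
qed

end
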